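(* Let $\lambda$ be a partition, $n\ge\ell(\lambda)$, and $M\in\mathrm{MLQ}(\lambda,n)$. Then $\operatorname{maj}_G(M)=\operatorname{maj}(M)$.
   Context: For a partition $\lambda$ with conjugate $\lambda'$ and $L=\lambda_1$, $\mathrm{MLQ}(\lambda,n)$ is the set of tuples $M=(B_1,\dots,B_L)$ of subsets of $[n]$ with $|B_j|=\lambda'_j$, drawn with rows $1..L$ bottom to top, columns $1..n$ left to right; cells $(r,j)$ with $j\in B_r$ are particles (balls), the others anti-particles. Major index $\operatorname{maj}$: for $r=L,\dots,2$, unlabelled balls of row $r$ get label $r$; balls of row $r$ in decreasing label order (left to right among ties) are each paired with the first unlabelled ball of row $r-1$ weakly to the right cyclically modulo $n$, which gets the same label; the pairing wraps if the lower ball is strictly left of the upper one. $\operatorname{maj}(M)=\sum(\ell(p)-r(p)+1)$ over wrapping pairings, $r(p)$ the row of the upper ball and $\ell(p)$ its label. Generalized major index $\operatorname{maj}_G$: label all cells. Row $L$: particles $L$, anti-particles $L-1$. For $r=L-1,\dots,1$: with $w_1,\dots,w_n$ the labels of row $r+1$, order columns $i_1,\dots,i_n$ with $w_{i_1}\ge\cdots\ge w_{i_n}$, ties by increasing column; $s=|B_r|$. Particle phase: for $k=1,\dots,s$, cell $(r+1,i_k)$ is paired with the first unlabelled particle of row $r$ weakly right of column $i_k$ cyclically, which gets label $w_{i_k}$; wrapping if its column is $<i_k$. Anti-particle phase: for $k=n,\dots,s+1$, cell $(r+1,i_k)$ is paired with the first unlabelled anti-particle of row $r$ weakly left of column $i_k$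 cyclically, which gets label $w_{i_k}-1$; wrapping if its column is $>i_k$. $\operatorname{maj}_G(M)=\sum_p(\ell(p)-r(p)+1)-\sum_{p'}(\ell(p')-r(p')+1)$, $p$ over wrapping particle-phase pairings, $p'$ over wrapping anti-particle-phase pairings, $r(\cdot)$ the row and $\ell(\cdot)$ the label of the upper cell. *)

theory Defs
  imports Main "HOL-Library.Product_Lexorder"
begin

definition is_partition :: "nat list \<Rightarrow> bool" where
  "is_partition lam \<longleftrightarrow> sorted_wrt (\<ge>) lam \<and> (\<forall>x\<in>set lam. 0 < x)"

definition conj_part :: "nat list \<Rightarrow> nat \<Rightarrow> nat" where
  "conj_part lam j = length (filter (\<lambda>x. j \<le> x) lam)"

definition largest_part :: "nat list \<Rightarrow> nat" where
  "largest_part lam = (if lam = [] then 0 else hd lam)"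

text \<open>MLQ(lam, n): lists [B_1, ..., B_L] (row r is entry r-1) of subsets of
  {1..n} with |B_j| = lam'_j.\<close>
definition MLQ :: "nat list \<Rightarrow> nat \<Rightarrow> nat set list set" where
  "MLQ lam n = {M. length M = largest_part lam \<and>
     (\<forall>j < length M. M ! j \<subseteq> {1..n} \<and> card (M ! j) = conj_part lam (Suc j))}"

text \<open>First column of A weakly right of i, cyclically mod n.\<close>
definition cyc_right :: "nat \<Rightarrow> nat \<Rightarrow> nat set \<Rightarrow> nat" where
  "cyc_right n i A = (let d = (LEAST d. (i + d - 1) mod n + 1 \<in> A) in (i + d - 1) mod n + 1)"

text \<open>First column of A weakly left of i, cyclically mod n.\<close>
definition cyc_left :: "nat \<Rightarrow> nat \<Rightarrow> nat set \<Rightarrow> nat" where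
  "cyc_left n i A = (let d = (LEAST d. (i - 1 + n - d mod n) mod n + 1 \<in> A)
                     in (i - 1 + n - d mod n) mod n + 1)"

text \<open>State: (unlabelled cells of the lower
  row, labels of lower row, accumulated contribution). \<open>ru\<close> is the row of the upper cell,
  \<open>lab\<close> the labels of the upper row, \<open>c\<close> the column of the upper cell.\<close>
definition step_p :: "nat \<Rightarrow> nat \<Rightarrow> (nat \<Rightarrow> int) \<Rightarrow> nat \<Rightarrow>
    nat set \<times> (nat \<Rightarrow> int) \<times> int \<Rightarrow> nat set \<times> (nat \<Rightarrow> int) \<times> int" where
  "step_p n ru lab c st = (case st of (A, L, s) \<Rightarrow>
     (let d = cyc_right n c A in
       (A - {d}, L(d := lab c), s + (if d < c then lab c - int ru + 1 else 0))))"

text \<open>One pairing step of the anti-particle type (lower cell gets label of upper minus 1;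
  wrapping if lower column strictly right).\<close>
definition step_a :: "nat \<Rightarrow> nat \<Rightarrow> (nat \<Rightarrow> int) \<Rightarrow> nat \<Rightarrow>
    nat set \<times> (nat \<Rightarrow> int) \<times> int \<Rightarrow> nat set \<times> (nat \<Rightarrow> int) \<times> int" where
  "step_a n ru lab c st = (case st of (A, L, s) \<Rightarrow>
     (let d = cyc_left n c A in
       (A - {d}, L(d := lab c - 1), s + (if c < d then lab c - int ru + 1 else 0))))"

text \<open>Processing upper row \<open>r\<close> (balls \<open>Bu\<close>, labels \<open>lab\<close>) onto lower row with balls \<open>Bl\<close>.\<close>
definition maj_step :: "nat \<Rightarrow> nat \<Rightarrow> nat set \<Rightarrow> (nat \<Rightarrow> int) \<Rightarrow> nat set \<Rightarrow> (nat \<Rightarrow> int) \<times> int" where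
  "maj_step n r Bu lab Bl =
     (let ord = sort_key (\<lambda>c. (- lab c, c)) (sorted_list_of_set Bu);
          (A, L, s) = fold (step_p n r lab) ord (Bl, \<lambda>_. 0, 0)
      in ((\<lambda>c. if c \<in> A then int r - 1 else L c), s))"

fun maj_from :: "nat \<Rightarrow> nat set list \<Rightarrow> nat \<Rightarrow> (nat \<Rightarrow> int) \<Rightarrow> int" where
  "maj_from n M 0 lab = 0"
| "maj_from n M (Suc 0) lab = 0"
| "maj_from n M (Suc (Suc k)) lab =
     (let (lab', s) = maj_step n (Suc (Suc k)) (M ! Suc k) lab (M ! k)
      in s + maj_from n M (Suc k) lab')"

definition maj :: "nat \<Rightarrow> nat set list \<Rightarrow> int" where
  "maj n M = maj_from n M (length M) (\<lambda>_. int (length M))"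

text \<open>Upper row \<open>ru = r+1\<close> with labels \<open>w\<close> on all columns, lower row particles \<open>Bl\<close>.\<close>
definition majG_step :: "nat \<Rightarrow> nat \<Rightarrow> (nat \<Rightarrow> int) \<Rightarrow> nat set \<Rightarrow> (nat \<Rightarrow> int) \<times> int" where
  "majG_step n ru w Bl =
     (let ord = sort_key (\<lambda>c. (- w c, c)) [1..<Suc n];
          s = card Bl;
          (A1, L1, s1) = fold (step_p n ru w) (take s ord) (Bl, \<lambda>_. 0, 0);
          (A2, L2, s2) = fold (step_a n ru w) (rev (drop s ord)) ({1..n} - Bl, L1, 0)
      in (L2, s1 - s2))"

fun majG_from :: "nat \<Rightarrow> nat set list \<Rightarrow> nat \<Rightarrow> (nat \<Rightarrow> int) \<Rightarrow> int" where
  "majG_from n M 0 w = 0"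
| "majG_from n M (Suc 0) w = 0"
| "majG_from n M (Suc (Suc k)) w =
     (let (w', s) = majG_step n (Suc (Suc k)) w (M ! k)
      in s + majG_from n M (Suc k) w')"

definition majG :: "nat \<Rightarrow> nat set list \<Rightarrow> int" where
  "majG n M = majG_from n M (length M)
     (\<lambda>c. if c \<in> M ! (length M - 1) then int (length M) else int (length M) - 1)"

end

theory Submission
  imports Defs "HOL-Library.Multiset"
begin

lemma cyc_right_in:
  assumes "A \<noteq> {}" "A \<subseteq> {1..n}"
  shows "cyc_right n i A \<in> A"
proof -
  obtain a where a: "a \<in> A" using assms by auto
  then have a1: "1 \<le> a" "a \<le> n" using assms by auto
  define d where "d = a + n*(i+1) - i"
  have "n * (i+1) \<ge> 1 * (i + 1)" using a1 by (intro mult_right_mono) auto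
  then have "n * (i+1) \<ge> i + 1" by simp
  then have e: "i + d - 1 = (a - 1) + n*(i+1)" unfolding d_def using a1 by simp
  have "((a - 1) + (i+1)*n) mod n = (a - 1) mod n" by (rule mod_mult_self1)
  then have "(i + d - 1) mod n + 1 = a" unfolding e using a1 by (simp add: mult.commute)
  then have "(i + d - 1) mod n + 1 \<in> A" using a by simp
  then show ?thesis unfolding cyc_right_def Let_def by (rule LeastI)
qed

lemma cyc_left_in:
  assumes "A \<noteq> {}" "A \<subseteq> {1..n}"
  shows "cyc_left n i A \<in> A"
proof -
  obtain a where a: "a \<in> A" using assms by auto
  then have a1: "1 \<le> a" "a \<le> n" using assms by auto
  define x where "x = i - 1"
  define e where "e = (if a - 1 \<le> x mod n then x mod n - (a - 1) else x mod n + n - (a - 1))"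
  have xl: "x mod n < n" using a1 by simp
  have en: "e < n" proof (cases "a - 1 \<le> x mod n")
    case True then show ?thesis unfolding e_def using xl by simp
  next
    case False then show ?thesis unfolding e_def using xl by simp
  qed
  have em: "e mod n = e" using en by simp
  have xs: "x = x mod n + n * (x div n)" by simp
  have "x + n - e = (x mod n + n - e) + n * (x div n)" using en xs by linarith
  then have "(x + n - e) mod n = (x mod n + n - e) mod n" by simp
  also have "(x mod n + n - e) mod n = a - 1"
  proof (cases "a - 1 \<le> x mod n")
    case True
    then have "x mod n + n - e = (a - 1) + n" unfolding e_def by simp
    moreover have "((a - 1) + n) mod n = (a - 1) mod n" by (rule mod_add_self2)
    moreover have "(a - 1) mod n = a - 1" using a1 by simp
    ultimately show ?thesis by simp
  next
    case False
    then have "x mod n + n - e = (a - 1)" unfolding e_def using a1 by simp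
    then show ?thesis using a1 by simp
  qed
  finally have "(i - 1 + n - e mod n) mod n + 1 = a" using em a1 unfolding x_def by simp
  then have "(i - 1 + n - e mod n) mod n + 1 \<in> A" using a by simp
  then show ?thesis unfolding cyc_left_def Let_def by (rule LeastI)
qed

lemma fold_p:
  "A \<subseteq> {1..n} \<Longrightarrow> length xs \<le> card A \<Longrightarrow> fold (step_p n ru lab) xs (A, L, s) = (A', L', s') \<Longrightarrow>
   A' \<subseteq> A \<and> card A' = card A - length xs \<and> (\<forall>c. c \<notin> A - A' \<longrightarrow> L' c = L c) \<and>
   (\<forall>c\<in>A - A'. \<exists>x\<in>set xs. L' c = lab x) \<and> ((\<forall>x\<in>set xs. lab x = int ru - 1) \<longrightarrow> s' = s)"
proof (induction xs arbitrary: A L s)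
  case Nil
  then show ?case by simp
next
  case (Cons x xs)
  have fin: "finite A" using Cons.prems(1) finite_subset by blast
  then have "A \<noteq> {}" using Cons.prems(2) by auto
  define d where "d = cyc_right n x A"
  have dA: "d \<in> A" unfolding d_def using cyc_right_in Cons.prems(1) \<open>A \<noteq> {}\<close> by blast
  have st: "step_p n ru lab x (A, L, s) = (A - {d}, L(d := lab x), s + (if d < x then lab x - int ru + 1 else 0))"
    unfolding step_p_def d_def Let_def by simp
  have f: "fold (step_p n ru lab) xs (A - {d}, L(d := lab x), s + (if d < x then lab x - int ru + 1 else 0)) = (A', L', s')"
    using Cons.prems(3) st by simp
  have cA: "card (A - {d}) = card A - 1" using dA fin by simp
  have IH: "A' \<subseteq> A - {d} \<and> card A' = card (A - {d}) - length xs \<and> (\<forall>c. c \<notin> (A - {d}) - A' \<longrightarrow> L' c = (L(d := lab x)) c) \<and>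
   (\<forall>c\<in>(A - {d}) - A'. \<exists>x\<in>set xs. L' c = lab x) \<and> ((\<forall>x\<in>set xs. lab x = int ru - 1) \<longrightarrow> s' = s + (if d < x then lab x - int ru + 1 else 0))"
  proof -
    have h1: "A - {d} \<subseteq> {1..n}" using Cons.prems(1) by blast
    have h2: "length xs \<le> card (A - {d})" using Cons.prems(2) cA by simp
    show ?thesis using Cons.IH[OF h1 h2 f] by blast
  qed
  show ?case
  proof (intro conjI)
    show "A' \<subseteq> A" using IH by blast
    show "card A' = card A - length (x # xs)" using IH cA by simp
    show "\<forall>c. c \<notin> A - A' \<longrightarrow> L' c = L c"
    proof (intro allI impI)
      fix c assume "c \<notin> A - A'"
      then have "c \<noteq> d" "c \<notin> (A - {d}) - A'" using dA IH by auto
      then show "L' c = L c" using IH by auto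
    qed
    show "\<forall>c\<in>A - A'. \<exists>y\<in>set (x # xs). L' c = lab y"
    proof
      fix c assume c: "c \<in> A - A'"
      show "\<exists>y\<in>set (x # xs). L' c = lab y"
      proof (cases "c = d")
        case True
        then have "c \<notin> (A - {d}) - A'" by auto
        then have "L' c = lab x" using IH True by auto
        then show ?thesis by auto
      next
        case False
        then have "c \<in> (A - {d}) - A'" using c by auto
        then show ?thesis using IH by auto
      qed
    qed
    show "(\<forall>y\<in>set (x # xs). lab y = int ru - 1) \<longrightarrow> s' = s" using IH by auto
  qed
qed

lemma fold_a:
  "A \<subseteq> {1..n} \<Longrightarrow> length xs \<le> card A \<Longrightarrow> fold (step_a n ru lab) xs (A, L, s) = (A', L', s') \<Longrightarrow>
   A' \<subseteq> A \<and> card A' = card A - length xs \<and> (\<forall>c. c \<notin> A - A' \<longrightarrow> L' c = L c) \<and>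
   (\<forall>c\<in>A - A'. \<exists>x\<in>set xs. L' c = lab x - 1) \<and> ((\<forall>x\<in>set xs. lab x = int ru - 1) \<longrightarrow> s' = s)"
proof (induction xs arbitrary: A L s)
  case Nil
  then show ?case by simp
next
  case (Cons x xs)
  have fin: "finite A" using Cons.prems(1) finite_subset by blast
  then have "A \<noteq> {}" using Cons.prems(2) by auto
  define d where "d = cyc_left n x A"
  have dA: "d \<in> A" unfolding d_def using cyc_left_in Cons.prems(1) \<open>A \<noteq> {}\<close> by blast
  have st: "step_a n ru lab x (A, L, s) = (A - {d}, L(d := lab x - 1), s + (if x < d then lab x - int ru + 1 else 0))"
    unfolding step_a_def d_def Let_def by simp
  have f: "fold (step_a n ru lab) xs (A - {d}, L(d := lab x - 1), s + (if x < d then lab x - int ru + 1 else 0)) = (A', L', s')"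
    using Cons.prems(3) st by simp
  have cA: "card (A - {d}) = card A - 1" using dA fin by simp
  have IH: "A' \<subseteq> A - {d} \<and> card A' = card (A - {d}) - length xs \<and> (\<forall>c. c \<notin> (A - {d}) - A' \<longrightarrow> L' c = (L(d := lab x - 1)) c) \<and>
   (\<forall>c\<in>(A - {d}) - A'. \<exists>x\<in>set xs. L' c = lab x - 1) \<and> ((\<forall>x\<in>set xs. lab x = int ru - 1) \<longrightarrow> s' = s + (if x < d then lab x - int ru + 1 else 0))"
  proof -
    have h1: "A - {d} \<subseteq> {1..n}" using Cons.prems(1) by blast
    have h2: "length xs \<le> card (A - {d})" using Cons.prems(2) cA by simp
    show ?thesis using Cons.IH[OF h1 h2 f] by blast
  qed
  show ?case
  proof (intro conjI)
    show "A' \<subseteq> A" using IH by blast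
    show "card A' = card A - length (x # xs)" using IH cA by simp
    show "\<forall>c. c \<notin> A - A' \<longrightarrow> L' c = L c"
    proof (intro allI impI)
      fix c assume "c \<notin> A - A'"
      then have "c \<noteq> d" "c \<notin> (A - {d}) - A'" using dA IH by auto
      then show "L' c = L c" using IH by auto
    qed
    show "\<forall>c\<in>A - A'. \<exists>y\<in>set (x # xs). L' c = lab y - 1"
    proof
      fix c assume c: "c \<in> A - A'"
      show "\<exists>y\<in>set (x # xs). L' c = lab y - 1"
      proof (cases "c = d")
        case True
        then have "c \<notin> (A - {d}) - A'" by auto
        then have "L' c = lab x - 1" using IH True by auto
        then show ?thesis by auto
      next
        case False
        then have "c \<in> (A - {d}) - A'" using c by auto
        then show ?thesis using IH by auto
      qed
    qed
    show "(\<forall>y\<in>set (x # xs). lab y = int ru - 1) \<longrightarrow> s' = s" using IH by auto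
  qed
qed

lemma ordG_split:
  assumes Bu: "Bu \<subseteq> {1..n}"
    and hu: "\<forall>c\<in>Bu. w c = lab c \<and> lab c \<ge> int r"
    and hn: "\<forall>c\<in>{1..n} - Bu. w c = int r - 1"
  shows "sort_key (\<lambda>c. (- w c, c)) [1..<Suc n] =
    sort_key (\<lambda>c. (- lab c, c)) (sorted_list_of_set Bu) @ sort_key (\<lambda>c. (- w c, c)) (sorted_list_of_set ({1..n} - Bu))"
    (is "sort_key ?f _ = ?U @ ?R")
proof (rule sort_key_inj_key_eq)
  have finB: "finite Bu" using Bu finite_subset by blast
  have msl: "\<And>X. mset (sorted_list_of_set X) = mset_set X"
    by (metis mset_sorted_list_of_multiset sorted_list_of_mset_set)
  have "mset (?U @ ?R) = mset_set Bu + mset_set ({1..n} - Bu)" by (simp only: mset_append mset_sort msl)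
  also have "\<dots> = mset_set (Bu \<union> ({1..n} - Bu))"
    by (rule mset_set_Union[symmetric]) (use finB in auto)
  also have "Bu \<union> ({1..n} - Bu) = {1..<Suc n}" using Bu by auto
  finally have X: "mset (?U @ ?R) = mset_set {1..<Suc n}" .
  show "mset [1..<Suc n] = mset (?U @ ?R)" unfolding mset_upt using X by (rule sym)
  show "inj_on ?f (set [1..<Suc n])" by (rule inj_onI) auto
  have setU: "set ?U = Bu" using finB by simp
  have setR: "set ?R = {1..n} - Bu" by simp
  have mU: "map ?f ?U = map (\<lambda>c. (- lab c, c)) ?U" using setU hu by auto
  have sU: "sorted (map ?f ?U)" unfolding mU by (rule sorted_sort_key)
  have sR: "sorted (map ?f ?R)" by (rule sorted_sort_key)
  have cross: "\<forall>x\<in>set (map ?f ?U). \<forall>y\<in>set (map ?f ?R). x \<le> y"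
  proof (intro ballI)
    fix x y assume "x \<in> set (map ?f ?U)" "y \<in> set (map ?f ?R)"
    then obtain a b where a: "a \<in> Bu" "x = ?f a" and b: "b \<in> {1..n} - Bu" "y = ?f b"
      using setU setR by auto
    have "- w a < - w b" using hu hn a b by auto
    then show "x \<le> y" using a b by (simp add: less_eq_prod_def)
  qed
  show "sorted (map ?f (?U @ ?R))" using sU sR cross by (simp add: sorted_append)
qed

lemma step_eq:
  assumes Bu: "Bu \<subseteq> {1..n}" and Bl: "Bl \<subseteq> {1..n}" and cb: "card Bu \<le> card Bl"
    and hu: "\<forall>c\<in>Bu. w c = lab c \<and> lab c \<ge> int r"
    and hn: "\<forall>c\<in>{1..n} - Bu. w c = int r - 1"
  shows "snd (majG_step n r w Bl) = snd (maj_step n r Bu lab Bl) \<and>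
    (\<forall>c\<in>Bl. fst (majG_step n r w Bl) c = fst (maj_step n r Bu lab Bl) c \<and> fst (maj_step n r Bu lab Bl) c \<ge> int r - 1) \<and>
    (\<forall>c\<in>{1..n} - Bl. fst (majG_step n r w Bl) c = int r - 2)"
proof -
  define U where "U = sort_key (\<lambda>c. (- lab c, c)) (sorted_list_of_set Bu)"
  define R where "R = sort_key (\<lambda>c. (- w c, c)) (sorted_list_of_set ({1..n} - Bu))"
  define k where "k = card Bl"
  have finB: "finite Bu" using Bu finite_subset by blast
  have finL: "finite Bl" using Bl finite_subset by blast
  have ord: "sort_key (\<lambda>c. (- w c, c)) [1..<Suc n] = U @ R"
    unfolding U_def R_def by (rule ordG_split[OF Bu hu hn])
  have setU: "set U = Bu" unfolding U_def using finB by simp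
  have setR: "set R = {1..n} - Bu" unfolding R_def by simp
  have lU: "length U = card Bu" unfolding U_def using finB by simp
  have cdB: "card ({1..n} - Bu) = n - card Bu" using Bu finB by (simp add: card_Diff_subset)
  have lR: "length R = n - card Bu" unfolding R_def using cdB by simp
  have kn: "k \<le> n" unfolding k_def using card_mono[OF _ Bl] by simp
  have cdL: "card ({1..n} - Bl) = n - k" unfolding k_def using Bl finL by (simp add: card_Diff_subset)
  define R1 where "R1 = take (k - card Bu) R"
  define R2 where "R2 = rev (drop (k - card Bu) R)"
  have tk: "take k (U @ R) = U @ R1" unfolding R1_def using lU cb k_def by simp
  have dk: "rev (drop k (U @ R)) = R2" unfolding R2_def using lU cb k_def by simp
  have lR1: "length R1 = k - card Bu" unfolding R1_def using lR kn cb k_def by simp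
  have lR2: "length R2 = n - k" unfolding R2_def using lR kn cb k_def by simp
  have setR1: "set R1 \<subseteq> {1..n} - Bu" unfolding R1_def using setR set_take_subset by fastforce
  have setR2: "set R2 \<subseteq> {1..n} - Bu" unfolding R2_def using setR set_drop_subset by fastforce
  obtain A L sm where F1: "fold (step_p n r lab) U (Bl, \<lambda>_. 0, 0) = (A, L, sm)"
    by (metis prod_cases3)
  have F1w: "fold (step_p n r w) U (Bl, \<lambda>_. 0, 0) = (A, L, sm)"
  proof -
    have e: "step_p n r w c = step_p n r lab c" if "c \<in> set U" for c
    proof -
      have "w c = lab c" using that setU hu by auto
      then show "step_p n r w c = step_p n r lab c" unfolding step_p_def by (simp add: fun_eq_iff Let_def)
    qed
    have "fold (step_p n r w) U (Bl, \<lambda>_. 0, 0) = fold (step_p n r lab) U (Bl, \<lambda>_. 0, 0)"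
      by (rule fold_cong) (use e in auto)
    then show ?thesis using F1 by simp
  qed
  have P1: "A \<subseteq> Bl \<and> card A = card Bl - length U \<and> (\<forall>c. c \<notin> Bl - A \<longrightarrow> L c = 0) \<and>
     (\<forall>c\<in>Bl - A. \<exists>x\<in>set U. L c = lab x)"
    using fold_p[OF Bl _ F1] lU cb by auto
  obtain A1 L1 s1 where F2: "fold (step_p n r w) R1 (A, L, sm) = (A1, L1, s1)"
    by (metis prod_cases3)
  have AS: "A \<subseteq> {1..n}" using P1 Bl by blast
  have wR1: "\<forall>x\<in>set R1. w x = int r - 1" using setR1 hn by auto
  have P2: "A1 \<subseteq> A \<and> card A1 = card A - length R1 \<and> (\<forall>c. c \<notin> A - A1 \<longrightarrow> L1 c = L c) \<and>
     (\<forall>c\<in>A - A1. \<exists>x\<in>set R1. L1 c = w x) \<and> s1 = sm"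
    using fold_p[OF AS _ F2] lR1 P1 lU k_def wR1 by auto
  have finA: "finite A" using P1 finL finite_subset by blast
  have A1e: "A1 = {}" using P2 P1 lR1 lU k_def finA finite_subset[of A1 A] by auto
  have L1: "\<forall>c. L1 c = (if c \<in> A then int r - 1 else L c)"
    using P2 A1e wR1 by auto
  obtain A2 L2 s2 where F3: "fold (step_a n r w) R2 ({1..n} - Bl, L1, 0) = (A2, L2, s2)"
    by (metis prod_cases3)
  have wR2: "\<forall>x\<in>set R2. w x = int r - 1" using setR2 hn by auto
  have DS: "{1..n} - Bl \<subseteq> {1..n}" by blast
  have P3: "A2 \<subseteq> {1..n} - Bl \<and> card A2 = card ({1..n} - Bl) - length R2 \<and> (\<forall>c. c \<notin> ({1..n} - Bl) - A2 \<longrightarrow> L2 c = L1 c) \<and>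
     (\<forall>c\<in>({1..n} - Bl) - A2. \<exists>x\<in>set R2. L2 c = w x - 1) \<and> s2 = 0"
    using fold_a[OF DS _ F3] lR2 cdL wR2 by auto
  have finA2: "finite A2" using P3 finite_subset by (metis finite_Diff finite_atLeastAtMost)
  have A2e: "A2 = {}" using P3 lR2 cdL finA2 by simp
  have L2: "\<forall>c. L2 c = (if c \<in> {1..n} - Bl then int r - 2 else L1 c)"
    using P3 A2e wR2 by force
  have G: "majG_step n r w Bl = (L2, s1 - s2)"
    unfolding majG_step_def Let_def ord k_def[symmetric] tk dk fold_append
    using F1w F2 F3 by simp
  have M: "maj_step n r Bu lab Bl = ((\<lambda>c. if c \<in> A then int r - 1 else L c), sm)"
    unfolding maj_step_def Let_def U_def[symmetric] using F1 by simp
  show ?thesis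
  proof (intro conjI)
    show "snd (majG_step n r w Bl) = snd (maj_step n r Bu lab Bl)" using G M P2 P3 by simp
    show "\<forall>c\<in>Bl. fst (majG_step n r w Bl) c = fst (maj_step n r Bu lab Bl) c \<and> fst (maj_step n r Bu lab Bl) c \<ge> int r - 1"
    proof
      fix c assume c: "c \<in> Bl"
      have "fst (maj_step n r Bu lab Bl) c \<ge> int r - 1"
      proof (cases "c \<in> A")
        case True then show ?thesis using M by simp
      next
        case False
        then obtain x where "x \<in> set U" "L c = lab x" using P1 c by blast
        then show ?thesis using M False setU hu by force
      qed
      then show "fst (majG_step n r w Bl) c = fst (maj_step n r Bu lab Bl) c \<and> fst (maj_step n r Bu lab Bl) c \<ge> int r - 1"
        using G M L1 L2 c by simp
    qed
    show "\<forall>c\<in>{1..n} - Bl. fst (majG_step n r w Bl) c = int r - 2" using G L2 by simp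
  qed
qed

lemma main_ind:
  "Suc k \<le> length M \<Longrightarrow> (\<forall>j\<le>k. M!j \<subseteq> {1..n}) \<Longrightarrow> (\<forall>j<k. card (M!Suc j) \<le> card (M!j)) \<Longrightarrow>
   (\<forall>c\<in>M!k. w c = lab c \<and> lab c \<ge> int (Suc k)) \<Longrightarrow> (\<forall>c\<in>{1..n} - M!k. w c = int k) \<Longrightarrow>
   majG_from n M (Suc k) w = maj_from n M (Suc k) lab"
proof (induction k arbitrary: w lab)
  case 0
  then show ?case by simp
next
  case (Suc k)
  obtain w' sg where G: "majG_step n (Suc (Suc k)) w (M!k) = (w', sg)" by fastforce
  obtain lab' sm where Mm: "maj_step n (Suc (Suc k)) (M!Suc k) lab (M!k) = (lab', sm)" by fastforce
  have Bu: "M!Suc k \<subseteq> {1..n}" and Bl: "M!k \<subseteq> {1..n}" using Suc.prems(2) by auto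
  have cb: "card (M!Suc k) \<le> card (M!k)" using Suc.prems(3) by auto
  have hu: "\<forall>c\<in>M!Suc k. w c = lab c \<and> lab c \<ge> int (Suc (Suc k))" using Suc.prems(4) by simp
  have hn: "\<forall>c\<in>{1..n} - M!Suc k. w c = int (Suc (Suc k)) - 1" using Suc.prems(5) by simp
  note S = step_eq[OF Bu Bl cb hu hn]
  have IH: "majG_from n M (Suc k) w' = maj_from n M (Suc k) lab'"
  proof (rule Suc.IH)
    show "Suc k \<le> length M" using Suc.prems(1) by simp
    show "\<forall>j\<le>k. M ! j \<subseteq> {1..n}" using Suc.prems(2) by simp
    show "\<forall>j<k. card (M ! Suc j) \<le> card (M ! j)" using Suc.prems(3) by simp
    show "\<forall>c\<in>M ! k. w' c = lab' c \<and> int (Suc k) \<le> lab' c" using S G Mm by auto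
    show "\<forall>c\<in>{1..n} - M ! k. w' c = int k" using S G Mm by auto
  qed
  have "sg = sm" using S G Mm by simp
  then show ?case using G Mm IH by simp
qed

theorem lemma4p30:
  fixes lam :: "nat list" and n :: nat and M :: "nat set list"
  assumes "is_partition lam" and "length lam \<le> n" and "M \<in> MLQ lam n"
  shows "majG n M = maj n M"
proof (cases "length M")
  case 0
  then show ?thesis unfolding majG_def maj_def by simp
next
  case (Suc k)
  have M: "\<forall>j < length M. M ! j \<subseteq> {1..n} \<and> card (M ! j) = conj_part lam (Suc j)"
    using assms(3) unfolding MLQ_def by simp
  have cp: "conj_part lam (Suc (Suc j)) \<le> conj_part lam (Suc j)" for j
    unfolding conj_part_def by (induction lam) auto
  show ?thesis unfolding majG_def maj_def Suc
  proof (rule main_ind)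
    show "Suc k \<le> length M" using Suc by simp
    show "\<forall>j\<le>k. M ! j \<subseteq> {1..n}" using M Suc by auto
    show "\<forall>j<k. card (M ! Suc j) \<le> card (M ! j)" using M Suc cp by auto
    show "\<forall>c\<in>M ! k. (\<lambda>c. if c \<in> M ! (Suc k - 1) then int (Suc k) else int (Suc k) - 1) c = (\<lambda>_. int (Suc k)) c \<and>
        int (Suc k) \<le> (\<lambda>_. int (Suc k)) c" by simp
    show "\<forall>c\<in>{1..n} - M ! k. (\<lambda>c. if c \<in> M ! (Suc k - 1) then int (Suc k) else int (Suc k) - 1) c = int k" by simp
  qed
qed

end
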